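(* Let $A,G$ be $n\times n$ symmetric positive definite matrices with $G\succeq A$, let $u\in\mathbb{R}^n\setminus\{0\}$, and let $G_+=\mathrm{SR1}(A,G,u)$. Then $$\nu^2(A,G,u)\ge\frac{u^\top(G-A)G_+^{-1}(G-A)u}{u^\top Gu}.$$
   Context: $\nu(A,G,u)=\left(\frac{u^\top(G-A)G^{-1}(G-A)u}{u^\top(A-AG^{-1}A)u}\right)^{1/2}$ for $G\succeq A$, with the convention (used in the paper) that $\nu(A,G,u)=0$ when $(G-A)u=0$. $\mathrm{SR1}(A,G,u)=G$ if $(G-A)u=0$, and otherwise $\mathrm{SR1}(A,G,u)=G-\frac{(G-A)uu^\top(G-A)}{u^\top(G-A)u}$. *)

theory Defs
  imports "HOL-Analysis.Analysis"
begin

definition sym_mat :: "real^'n^'n \<Rightarrow> bool" where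
  "sym_mat M \<longleftrightarrow> transpose M = M"

definition pos_def :: "real^'n^'n \<Rightarrow> bool" where
  "pos_def M \<longleftrightarrow> sym_mat M \<and> (\<forall>x. x \<noteq> 0 \<longrightarrow> x \<bullet> (M *v x) > 0)"

definition loewner_ge :: "real^'n^'n \<Rightarrow> real^'n^'n \<Rightarrow> bool" where
  "loewner_ge G A \<longleftrightarrow> (\<forall>x. x \<bullet> ((G - A) *v x) \<ge> 0)"

definition nu :: "real^'n^'n \<Rightarrow> real^'n^'n \<Rightarrow> real^'n \<Rightarrow> real" where
  "nu A G u = (if (G - A) *v u = 0 then 0 else
     sqrt ((u \<bullet> (((G - A) ** matrix_inv G ** (G - A)) *v u)) /
           (u \<bullet> ((A - A ** matrix_inv G ** A) *v u))))"

definition SR1 :: "real^'n^'n \<Rightarrow> real^'n^'n \<Rightarrow> real^'n \<Rightarrow> real^'n^'n" where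
  "SR1 A G u = (if (G - A) *v u = 0 then G else
     G - (1 / (u \<bullet> ((G - A) *v u))) *\<^sub>R
           (\<chi> i j. ((G - A) *v u) $ i * ((G - A) *v u) $ j))"

end

theory Submission
  imports Defs
begin

lemma inv_props:
  fixes M :: "real^'n^'n"
  assumes "invertible M"
  shows "M ** matrix_inv M = mat 1" "matrix_inv M ** M = mat 1"
proof -
  have "\<exists>A'. M ** A' = mat 1 \<and> A' ** M = mat 1" using assms unfolding invertible_def by blast
  from someI_ex[OF this] show "M ** matrix_inv M = mat 1" "matrix_inv M ** M = mat 1"
    unfolding matrix_inv_def by auto
qed

lemma inv_by_ker:
  fixes M :: "real^'n^'n"
  assumes "\<And>x. M *v x = 0 \<Longrightarrow> x = 0"
  shows "invertible M"
  using assms matrix_left_invertible_ker invertible_left_inverse by metis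

lemma sym_inner:
  fixes M :: "real^'n^'n"
  assumes "sym_mat M"
  shows "x \<bullet> (M *v y) = y \<bullet> (M *v x)"
proof -
  have "x \<bullet> (M *v y) = (x v* M) \<bullet> y" by (simp add: dot_lmul_matrix)
  also have "x v* M = transpose M *v x" by simp
  also have "\<dots> = M *v x" using assms by (simp add: sym_mat_def)
  finally show ?thesis by (simp add: inner_commute)
qed

lemma rank1_mult:
  fixes r x :: "real^'n"
  shows "(\<chi> i j. r$i * r$j) *v x = (r \<bullet> x) *\<^sub>R r"
  by (simp add: vec_eq_iff matrix_vector_mult_def inner_vec_def sum_distrib_left mult.commute mult.left_commute)

lemma scaleR_mat_mult:
  fixes X :: "real^'n^'n"
  shows "(c *\<^sub>R X) *v x = c *\<^sub>R (X *v x)"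
  by (simp add: vec_eq_iff matrix_vector_mult_def sum_distrib_left mult.assoc)

lemma sym_diff: "sym_mat A \<Longrightarrow> sym_mat G \<Longrightarrow> sym_mat (G - A)"
  by (simp add: sym_mat_def transpose_def vec_eq_iff)

lemma inner_lin:
  fixes M :: "real^'n^'n"
  shows "(x - t *\<^sub>R u) \<bullet> (M *v (x - t *\<^sub>R u)) =
     x \<bullet> (M *v x) - t * (x \<bullet> (M *v u)) - t * (u \<bullet> (M *v x)) + t^2 * (u \<bullet> (M *v u))"
  by (simp add: algebra_simps inner_diff_left inner_diff_right power2_eq_square)

theorem lemma5:
  fixes A G :: "real^'n^'n" and u :: "real^'n"
  assumes "pos_def A" and "pos_def G" and "loewner_ge G A" and "u \<noteq> 0"
  shows "(nu A G u)\<^sup>2 \<ge>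
    (u \<bullet> (((G - A) ** matrix_inv (SR1 A G u) ** (G - A)) *v u)) / (u \<bullet> (G *v u))"
proof (cases "(G - A) *v u = 0")
  case True
  then show ?thesis
    by (simp add: nu_def SR1_def matrix_vector_mul_assoc[symmetric])
next
  case False
  define M where "M = G - A"
  define r where "r = M *v u"
  have symA: "sym_mat A" and symG: "sym_mat G" using assms by (auto simp: pos_def_def)
  have symM: "sym_mat M" unfolding M_def using symA symG by (rule sym_diff)
  have psd: "\<And>x. x \<bullet> (M *v x) \<ge> 0" using assms(3) by (simp add: loewner_ge_def M_def)
  have r0: "r \<noteq> 0" using False by (simp add: r_def M_def)
  define s where "s = u \<bullet> r"
  have s_pos: "s > 0"
  proof (rule ccontr)
    assume "\<not> s > 0"
    then have s0: "u \<bullet> (M *v u) = 0" using psd[of u] by (simp add: s_def r_def)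
    define c where "c = r \<bullet> r"
    have c: "c > 0" using r0 by (simp add: c_def)
    have rMu: "r \<bullet> (M *v u) = c" by (simp add: c_def r_def)
    have uMr: "u \<bullet> (M *v r) = c" using sym_inner[OF symM, of u r] rMu by simp
    define t where "t = (r \<bullet> (M *v r) + 1) / (2 * c)"
    have "(r - t *\<^sub>R u) \<bullet> (M *v (r - t *\<^sub>R u)) = r \<bullet> (M *v r) - 2 * t * c"
      using inner_lin[of r t u M] s0 rMu uMr by simp
    also have "\<dots> = -1" using c by (simp add: t_def field_simps)
    finally show False using psd[of "r - t *\<^sub>R u"] by simp
  qed
  have CS: "(r \<bullet> x)^2 \<le> s * (x \<bullet> (M *v x))" for x
  proof -
    define t where "t = (r \<bullet> x) / s"
    have e1: "x \<bullet> (M *v u) = r \<bullet> x" by (simp add: r_def inner_commute)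
    have e2: "u \<bullet> (M *v x) = r \<bullet> x" using sym_inner[OF symM, of u x] e1 by simp
    have "0 \<le> (x - t *\<^sub>R u) \<bullet> (M *v (x - t *\<^sub>R u))" by (rule psd)
    also have "\<dots> = x \<bullet> (M *v x) - (r \<bullet> x)^2 / s"
    proof -
      have "(x - t *\<^sub>R u) \<bullet> (M *v (x - t *\<^sub>R u)) = x \<bullet> (M *v x) - 2 * t * (r \<bullet> x) + t^2 * s"
        using inner_lin[of x t u M] e1 e2 by (simp add: s_def r_def)
      also have "\<dots> = x \<bullet> (M *v x) - (r \<bullet> x)^2 / s"
        using s_pos by (simp add: t_def field_simps power2_eq_square)
      finally show ?thesis .
    qed
    finally show ?thesis using s_pos by (simp add: field_simps)
  qed
  define Gp where "Gp = SR1 A G u"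
  have Gp_mult: "Gp *v x = G *v x - ((r \<bullet> x) / s) *\<^sub>R r" for x
    using False unfolding Gp_def SR1_def
    by (simp add: M_def[symmetric] r_def[symmetric] s_def[symmetric] scaleR_mat_mult rank1_mult algebra_simps)
  have pdA: "x \<noteq> 0 \<Longrightarrow> x \<bullet> (A *v x) > 0" for x using assms(1) by (simp add: pos_def_def)
  have pdG: "x \<noteq> 0 \<Longrightarrow> x \<bullet> (G *v x) > 0" for x using assms(2) by (simp add: pos_def_def)
  have GAM: "G *v x = A *v x + M *v x" for x by (simp add: M_def algebra_simps)
  have Gp_quad: "x \<bullet> (Gp *v x) \<ge> x \<bullet> (A *v x)" for x
  proof -
    have "x \<bullet> (Gp *v x) = x \<bullet> (A *v x) + (x \<bullet> (M *v x) - (r \<bullet> x)^2 / s)"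
      by (simp add: Gp_mult GAM inner_add_right inner_diff_right power2_eq_square inner_commute)
    moreover have "(r \<bullet> x)^2 / s \<le> x \<bullet> (M *v x)" using CS[of x] s_pos by (simp add: field_simps)
    ultimately show ?thesis by simp
  qed
  have invGp: "invertible Gp"
  proof (rule inv_by_ker)
    fix x assume "Gp *v x = 0"
    then have "x \<bullet> (A *v x) \<le> 0" using Gp_quad[of x] by simp
    then show "x = 0" using pdA[of x] by fastforce
  qed
  have invG: "invertible G"
  proof (rule inv_by_ker)
    fix x assume "G *v x = 0"
    then show "x = 0" using pdG[of x] by fastforce
  qed
  define Gpi where "Gpi = matrix_inv Gp"
  define Gi where "Gi = matrix_inv G"
  have GpGpi: "Gp *v (Gpi *v x) = x" for x
    using inv_props[OF invGp] by (simp add: Gpi_def matrix_vector_mul_assoc)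
  have GiG: "Gi *v (G *v x) = x" for x
    using inv_props[OF invG] by (simp add: Gi_def matrix_vector_mul_assoc)
  have GGi: "G *v (Gi *v x) = x" for x
    using inv_props[OF invG] by (simp add: Gi_def matrix_vector_mul_assoc)
  define y where "y = Gpi *v r"
  have Gpy: "Gp *v y = r" by (simp add: y_def GpGpi)
  have y0: "y \<noteq> 0" using Gpy r0 by auto
  define b where "b = r \<bullet> y"
  have b_pos: "b > 0"
  proof -
    have "b = y \<bullet> (Gp *v y)" using Gpy by (simp add: b_def inner_commute)
    also have "\<dots> \<ge> y \<bullet> (A *v y)" by (rule Gp_quad)
    finally show ?thesis using pdA[OF y0] by simp
  qed
  have Gy: "G *v y = (1 + b / s) *\<^sub>R r"
    using Gpy Gp_mult[of y] by (simp add: b_def algebra_simps)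
  define w where "w = Gi *v r"
  have Gw: "G *v w = r" by (simp add: w_def GGi)
  have yw: "y = (1 + b / s) *\<^sub>R w"
    using arg_cong[OF Gy, of "(*v) Gi"] by (simp add: GiG w_def matrix_vector_mult_scaleR)
  define a where "a = r \<bullet> w"
  have w0: "w \<noteq> 0" using Gw r0 by auto
  have a_pos: "a > 0"
    using pdG[OF w0] Gw by (simp add: a_def inner_commute)
  have ba: "b = (1 + b / s) * a"
  proof -
    have "r \<bullet> y = (1 + b / s) * (r \<bullet> w)" by (subst yw) (simp only: inner_scaleR_right)
    then show ?thesis by (simp only: b_def[symmetric] a_def[symmetric])
  qed
  have ba2: "b * (s - a) = a * s" using ba s_pos by (simp add: field_simps)
  have sa: "s - a > 0"
  proof -
    have "b * (s - a) > 0" using ba2 a_pos s_pos by simp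
    then show ?thesis using b_pos by (simp add: zero_less_mult_iff)
  qed
  have num: "u \<bullet> ((M ** Gpi ** M) *v u) = b"
  proof -
    have "u \<bullet> ((M ** Gpi ** M) *v u) = u \<bullet> (M *v y)"
      by (simp add: y_def r_def matrix_vector_mul_assoc[symmetric])
    also have "\<dots> = y \<bullet> r" using sym_inner[OF symM, of u y] by (simp add: r_def)
    finally show ?thesis by (simp add: b_def inner_commute)
  qed
  have nnum: "u \<bullet> ((M ** Gi ** M) *v u) = a"
  proof -
    have "u \<bullet> ((M ** Gi ** M) *v u) = u \<bullet> (M *v w)"
      by (simp add: w_def r_def matrix_vector_mul_assoc[symmetric])
    also have "\<dots> = w \<bullet> r" using sym_inner[OF symM, of u w] by (simp add: r_def)
    finally show ?thesis by (simp add: a_def inner_commute)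
  qed
  have Au: "A *v u = G *v u - r" by (simp add: r_def M_def algebra_simps)
  have GiAu: "Gi *v (A *v u) = u - w" by (simp add: Au matrix_vector_mult_diff_distrib GiG w_def)
  have nden: "u \<bullet> ((A - A ** Gi ** A) *v u) = s - a"
  proof -
    have "u \<bullet> ((A - A ** Gi ** A) *v u) = u \<bullet> (A *v u) - u \<bullet> (A *v (Gi *v (A *v u)))"
      by (simp add: matrix_vector_mult_diff_rdistrib inner_diff_right matrix_vector_mul_assoc[symmetric])
    also have "\<dots> = u \<bullet> (A *v w)" by (simp add: GiAu matrix_vector_mult_diff_distrib inner_diff_right)
    also have "\<dots> = w \<bullet> (A *v u)" by (rule sym_inner[OF symA])
    also have "\<dots> = w \<bullet> (G *v u) - a" by (simp add: Au inner_diff_right a_def inner_commute)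
    also have "w \<bullet> (G *v u) = u \<bullet> (G *v w)" by (rule sym_inner[OF symG])
    also have "\<dots> = s" by (simp add: Gw s_def)
    finally show ?thesis .
  qed
  define q where "q = u \<bullet> (G *v u)"
  have qs: "q = u \<bullet> (A *v u) + s" by (simp add: q_def GAM inner_add_right s_def r_def)
  have q_ge: "q \<ge> s" using qs pdA[OF assms(4)] by simp
  have nu2: "(nu A G u)\<^sup>2 = a / (s - a)"
    using False sa a_pos by (simp add: nu_def M_def[symmetric] Gi_def[symmetric] nnum nden)
  have rhs: "(u \<bullet> (((G - A) ** matrix_inv (SR1 A G u) ** (G - A)) *v u)) / (u \<bullet> (G *v u)) = b / q"
    by (simp add: M_def[symmetric] Gp_def[symmetric] Gpi_def[symmetric] num q_def)
  have bq: "b = a * s / (s - a)" using ba2 sa by (simp add: field_simps)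
  have "b / q \<le> a / (s - a)"
  proof -
    have "b / q = (a / (s - a)) * (s / q)" using bq by simp
    also have "\<dots> \<le> (a / (s - a)) * 1"
      using q_ge s_pos sa a_pos by (intro mult_left_mono) auto
    finally show ?thesis by simp
  qed
  then show ?thesis using nu2 rhs by simp
qed

end
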